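(* Let $(X,g)$ be an oriented Riemannian manifold and $\beta\in\Omega^2(X)$. Then $$\operatorname{div}S_{g,\beta}=v_g(\beta)\Big\{\big\langle i(e_k)d\beta,\,(G_\beta^{-1}\circ\beta^\sharp)^\flat\big\rangle\,G_\beta^{-1}(e_k)-(G_\beta^{-1}\circ\beta^\sharp)\big((\delta_\beta\beta)^\sharp\big)\Big\}^\flat\in\Omega^1(X),$$ where $\{e_k\}$ is any local orthonormal frame (summed over $k$). In particular, if $d\beta=0$ and $\delta_\beta\beta=0$ then $\beta$ satisfies a conservation law.
   Context: Let $(X,g)$ be an oriented $n$-dimensional Riemannian manifold without boundary, with Levi-Civita connection $D$ and volume form $\mathrm{vol}_g$; $\{e_i\}$ denotes a local orthonormal frame with dual coframe $\{e^i\}$, $D_i=D_{e_i}$, and repeated indices are summed. For a 2-form $\beta$, $\beta^\sharp\in\Gamma(\mathrm{End}\,TX)$ is defined by $g(\beta^\sharp(u),w)=\beta(u,w)$. Set $G_\beta=\mathrm{id}_{TX}-\beta^\sharp\circ\beta^\sharp$ (positive definite) and $v_g(\beta)=\sqrt{\det(\mathrm{id}_{TX}+\beta^\sharp)}=(\det G_\beta)^{1/4}$. For $K\in\Gamma(\mathrm{End}\,TX)$, $K^\flat(u,w)=g(K(u),w)$; for a vector $u$, $u^\flat=g(u,\cdot)$; for a 1-form $\alpha$, $\alpha^\sharp$ is its metric dual vector. ($G_\beta^{-1}\circ\beta^\sharp$ is skew-symmetric, so $(G_\beta^{-1}\circ\beta^\sharp)^\flat$ is a 2-form; the pairing of 2-forms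 is the standard inner product.) The stress-energy tensor is $S_{g,\beta}=-g+v_g(\beta)(G_\beta^{-1})^\flat$, and the divergence of a symmetric 2-tensor $S$ is the 1-form $\operatorname{div}S=(D_iS)(e_i,\cdot)$. $\beta$ satisfies a conservation law if $\operatorname{div}S_{g,\beta}=0$. The operator $\delta_\beta:\Omega^k\to\Omega^{k-1}$ is $\delta_\beta\alpha=-\,i(G_\beta^{-1}(e_i))D_i\alpha$. *)

theory Defs
  imports "HOL-Analysis.Analysis"
begin

text \<open>Local coordinate model of an n-dimensional Riemannian manifold: an open set
U of real^'n (coordinates x^1..x^n), metric given by its coefficient matrix field
g x (g_ab = g x $ a $ b). Conventions:
 tangent vectors = component vectors u :: real^'n (u = u^a d/dx^a);
 1-forms = component vectors alpha (alpha(w) = alpha \<bullet> w);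
 covariant 2-tensors = matrices M with T(u,w) = u \<bullet> (M *v w);
 endomorphisms of TX = matrices K acting by K *v u;
 covariant 3-tensors = W with W(u,v,w) = sum u_a v_b w_c W_abc.\<close>

definition pd :: "'n::finite \<Rightarrow> (real^'n \<Rightarrow> real) \<Rightarrow> real^'n \<Rightarrow> real" where
  "pd i f x = frechet_derivative f (at x) (axis i 1)"

fun pds :: "'n::finite list \<Rightarrow> (real^'n \<Rightarrow> real) \<Rightarrow> real^'n \<Rightarrow> real" where
  "pds [] f = f"
| "pds (i # is) f = pd i (pds is f)"

definition smooth_on :: "(real^'n::finite) set \<Rightarrow> (real^'n \<Rightarrow> real) \<Rightarrow> bool" where
  "smooth_on U f \<longleftrightarrow> (\<forall>is. \<forall>x\<in>U. pds is f differentiable (at x))"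

definition smooth_matrix_on :: "(real^'n::finite) set \<Rightarrow> (real^'n \<Rightarrow> real^'n^'n) \<Rightarrow> bool" where
  "smooth_matrix_on U M \<longleftrightarrow> (\<forall>a b. smooth_on U (\<lambda>y. M y $ a $ b))"

definition riem_metric_on :: "(real^'n::finite) set \<Rightarrow> (real^'n \<Rightarrow> real^'n^'n) \<Rightarrow> bool" where
  "riem_metric_on U g \<longleftrightarrow> smooth_matrix_on U g \<and>
     (\<forall>x\<in>U. transpose (g x) = g x \<and> (\<forall>u. u \<noteq> 0 \<longrightarrow> u \<bullet> (g x *v u) > 0))"

definition two_form_on :: "(real^'n::finite) set \<Rightarrow> (real^'n \<Rightarrow> real^'n^'n) \<Rightarrow> bool" where
  "two_form_on U b \<longleftrightarrow> smooth_matrix_on U b \<and> (\<forall>x\<in>U. transpose (b x) = - b x)"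

definition ten2 :: "real^'n^'n \<Rightarrow> real^'n \<Rightarrow> real^'n \<Rightarrow> real" where
  "ten2 M u w = u \<bullet> (M *v w)"

definition gip :: "(real^'n \<Rightarrow> real^'n^'n) \<Rightarrow> real^'n \<Rightarrow> real^'n \<Rightarrow> real^'n \<Rightarrow> real" where
  "gip g x u w = ten2 (g x) u w"

definition orthonormal_frame_on :: "(real^'n::finite) set \<Rightarrow> (real^'n \<Rightarrow> real^'n^'n) \<Rightarrow> ('n \<Rightarrow> real^'n \<Rightarrow> real^'n) \<Rightarrow> bool" where
  "orthonormal_frame_on U g E \<longleftrightarrow>
     (\<forall>x\<in>U. \<forall>k l. gip g x (E k x) (E l x) = (if k = l then 1 else 0))"

definition chr :: "(real^'n::finite \<Rightarrow> real^'n^'n) \<Rightarrow> real^'n \<Rightarrow> 'n \<Rightarrow> 'n \<Rightarrow> 'n \<Rightarrow> real" where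
  "chr g x k i j = (1/2) * (\<Sum>m\<in>UNIV. matrix_inv (g x) $ k $ m *
      (pd i (\<lambda>y. g y $ m $ j) x + pd j (\<lambda>y. g y $ m $ i) x - pd m (\<lambda>y. g y $ i $ j) x))"

definition covD2 :: "(real^'n::finite \<Rightarrow> real^'n^'n) \<Rightarrow> (real^'n \<Rightarrow> real^'n^'n) \<Rightarrow> real^'n \<Rightarrow> real^'n \<Rightarrow> real^'n^'n" where
  "covD2 g T x u = (\<chi> j l. \<Sum>i\<in>UNIV. u $ i *
      (pd i (\<lambda>y. T y $ j $ l) x - (\<Sum>m\<in>UNIV. chr g x m i j * T x $ m $ l)
        - (\<Sum>m\<in>UNIV. chr g x m i l * T x $ j $ m)))"

text \<open>beta^sharp: g(beta^sharp u, w) = beta(u,w).\<close>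
definition bsharp :: "(real^'n::finite \<Rightarrow> real^'n^'n) \<Rightarrow> (real^'n \<Rightarrow> real^'n^'n) \<Rightarrow> real^'n \<Rightarrow> real^'n^'n" where
  "bsharp g b x = matrix_inv (g x) ** transpose (b x)"

text \<open>K^flat(u,w) = g(K u, w).\<close>
definition end_flat :: "(real^'n::finite \<Rightarrow> real^'n^'n) \<Rightarrow> real^'n \<Rightarrow> real^'n^'n \<Rightarrow> real^'n^'n" where
  "end_flat g x K = transpose K ** g x"

definition vflat :: "(real^'n::finite \<Rightarrow> real^'n^'n) \<Rightarrow> real^'n \<Rightarrow> real^'n \<Rightarrow> real^'n" where
  "vflat g x u = g x *v u"

definition fsharp :: "(real^'n::finite \<Rightarrow> real^'n^'n) \<Rightarrow> real^'n \<Rightarrow> real^'n \<Rightarrow> real^'n" where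
  "fsharp g x \<alpha> = matrix_inv (g x) *v \<alpha>"

definition Gb :: "(real^'n::finite \<Rightarrow> real^'n^'n) \<Rightarrow> (real^'n \<Rightarrow> real^'n^'n) \<Rightarrow> real^'n \<Rightarrow> real^'n^'n" where
  "Gb g b x = mat 1 - bsharp g b x ** bsharp g b x"

definition vg :: "(real^'n::finite \<Rightarrow> real^'n^'n) \<Rightarrow> (real^'n \<Rightarrow> real^'n^'n) \<Rightarrow> real^'n \<Rightarrow> real" where
  "vg g b x = sqrt (det (mat 1 + bsharp g b x))"

definition stress :: "(real^'n::finite \<Rightarrow> real^'n^'n) \<Rightarrow> (real^'n \<Rightarrow> real^'n^'n) \<Rightarrow> real^'n \<Rightarrow> real^'n^'n" where
  "stress g b x = - g x + vg g b x *\<^sub>R end_flat g x (matrix_inv (Gb g b x))"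

definition divT :: "(real^'n::finite \<Rightarrow> real^'n^'n) \<Rightarrow> ('n \<Rightarrow> real^'n \<Rightarrow> real^'n) \<Rightarrow> (real^'n \<Rightarrow> real^'n^'n) \<Rightarrow> real^'n \<Rightarrow> real^'n" where
  "divT g E S x = (\<chi> l. \<Sum>k\<in>UNIV. ten2 (covD2 g S x (E k x)) (E k x) (axis l 1))"

text \<open>Exterior derivative of a 2-form: (d beta)_abc = d_a beta_bc + d_b beta_ca + d_c beta_ab
  (determinant convention for wedge products).\<close>
definition dform2 :: "(real^'n::finite \<Rightarrow> real^'n^'n) \<Rightarrow> real^'n \<Rightarrow> real^'n^'n^'n" where
  "dform2 b x = (\<chi> a c e. pd a (\<lambda>y. b y $ c $ e) x + pd c (\<lambda>y. b y $ e $ a) x + pd e (\<lambda>y. b y $ a $ c) x)"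

definition interior3 :: "real^'n::finite \<Rightarrow> real^'n^'n^'n \<Rightarrow> real^'n^'n" where
  "interior3 u W = (\<chi> c e. \<Sum>a\<in>UNIV. u $ a * W $ a $ c $ e)"

text \<open>Standard inner product of 2-forms: sum over i<j of alpha(e_i,e_j) gamma(e_i,e_j).\<close>
definition ip2 :: "('n::finite \<Rightarrow> real^'n \<Rightarrow> real^'n) \<Rightarrow> real^'n \<Rightarrow> real^'n^'n \<Rightarrow> real^'n^'n \<Rightarrow> real" where
  "ip2 E x \<alpha> \<gamma> = (1/2) * (\<Sum>p\<in>UNIV. \<Sum>q\<in>UNIV. ten2 \<alpha> (E p x) (E q x) * ten2 \<gamma> (E p x) (E q x))"

definition delta_b :: "(real^'n::finite \<Rightarrow> real^'n^'n) \<Rightarrow> ('n \<Rightarrow> real^'n \<Rightarrow> real^'n) \<Rightarrow> (real^'n \<Rightarrow> real^'n^'n)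
    \<Rightarrow> (real^'n \<Rightarrow> real^'n^'n) \<Rightarrow> real^'n \<Rightarrow> real^'n" where
  "delta_b g E b \<alpha> x = (\<chi> l. - (\<Sum>i\<in>UNIV.
      ten2 (covD2 g \<alpha> x (E i x)) (matrix_inv (Gb g b x) *v E i x) (axis l 1)))"

end

theory Submission
  imports Defs
begin

lemma minv_works:
  fixes A :: "real^'n^'n"
  assumes "invertible A"
  shows "A ** matrix_inv A = mat 1" "matrix_inv A ** A = mat 1"
proof -
  have "\<exists>A'. A ** A' = mat 1 \<and> A' ** A = mat 1" using assms by (simp add: invertible_def)
  hence "A ** matrix_inv A = mat 1 \<and> matrix_inv A ** A = mat 1"
    unfolding matrix_inv_def by (rule someI_ex)
  thus "A ** matrix_inv A = mat 1" "matrix_inv A ** A = mat 1" by auto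
qed

lemma minv_unique:
  fixes A A' :: "real^'n^'n"
  assumes "A' ** A = mat 1"
  shows "invertible A" "matrix_inv A = A'"
proof -
  have r: "A ** A' = mat 1" using assms matrix_left_right_inverse by blast
  show i: "invertible A" unfolding invertible_def using assms r by blast
  have "matrix_inv A = (A' ** A) ** matrix_inv A" using assms by simp
  also have "\<dots> = A' ** (A ** matrix_inv A)" by (simp add: matrix_mul_assoc)
  also have "\<dots> = A'" using minv_works[OF i] by simp
  finally show "matrix_inv A = A'" .
qed

lemma ker_invertible:
  fixes A :: "real^'n^'n"
  assumes "\<And>u. A *v u = 0 \<Longrightarrow> u = 0"
  shows "invertible A"
proof -
  have "inj ((*v) A)"
  proof (rule injI)
    fix u w assume "A *v u = A *v w"
    then have "A *v (u - w) = 0" by (simp add: matrix_vector_mult_diff_distrib)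
    then have "u - w = 0" by (rule assms)
    then show "u = w" by simp
  qed
  then have "det (matrix ((*v) A)) \<noteq> 0" using det_nz_iff_inj[of "(*v) A"] by simp
  then show ?thesis by (simp add: invertible_det_nz)
qed


lemma pd_hd: "(f has_derivative D) (at x) \<Longrightarrow> pd i f x = D (axis i 1)"
  unfolding pd_def using frechet_derivative_at by metis

lemma fd_works: "f differentiable (at x) \<Longrightarrow> (f has_derivative frechet_derivative f (at x)) (at x)"
  using frechet_derivative_works by blast

lemma pd_const[simp]: "pd i (\<lambda>y. c) x = 0"
  by (rule trans[OF pd_hd[OF has_derivative_const]]) simp

lemma pd_add:
  assumes "f differentiable (at x)" "g differentiable (at x)"
  shows "pd i (\<lambda>y. f y + g y) x = pd i f x + pd i g x"
  using pd_hd[OF has_derivative_add[OF fd_works[OF assms(1)] fd_works[OF assms(2)]]]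
  by (simp add: pd_def)

lemma pd_diff:
  assumes "f differentiable (at x)" "g differentiable (at x)"
  shows "pd i (\<lambda>y. f y - g y) x = pd i f x - pd i g x"
  using pd_hd[OF has_derivative_diff[OF fd_works[OF assms(1)] fd_works[OF assms(2)]]]
  by (simp add: pd_def)

lemma pd_minus:
  assumes "f differentiable (at x)"
  shows "pd i (\<lambda>y. - f y) x = - pd i f x"
  using pd_hd[OF has_derivative_minus[OF fd_works[OF assms(1)]]]
  by (simp add: pd_def)

lemma pd_mult:
  fixes f g :: "real^'n::finite \<Rightarrow> real"
  assumes "f differentiable (at x)" "g differentiable (at x)"
  shows "pd i (\<lambda>y. f y * g y) x = pd i f x * g x + f x * pd i g x"
  using pd_hd[OF has_derivative_mult[OF fd_works[OF assms(1)] fd_works[OF assms(2)]]]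
  by (simp add: pd_def)

lemma pd_cmult:
  fixes f :: "real^'n::finite \<Rightarrow> real"
  assumes "f differentiable (at x)"
  shows "pd i (\<lambda>y. c * f y) x = c * pd i f x"
  using pd_mult[OF differentiable_const[of c] assms] by simp

lemma pd_sum:
  fixes f :: "'k \<Rightarrow> real^'n::finite \<Rightarrow> real"
  assumes "\<And>k. k \<in> S \<Longrightarrow> f k differentiable (at x)"
  shows "pd i (\<lambda>y. \<Sum>k\<in>S. f k y) x = (\<Sum>k\<in>S. pd i (f k) x)"
  using pd_hd[OF has_derivative_sum[of S f "\<lambda>k. frechet_derivative (f k) (at x)", OF fd_works[OF assms]]]
  by (simp add: pd_def)

lemma pd_prod:
  fixes f :: "'k \<Rightarrow> real^'n::finite \<Rightarrow> real"
  assumes "\<And>k. k \<in> S \<Longrightarrow> f k differentiable (at x)"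
  shows "pd i (\<lambda>y. \<Prod>k\<in>S. f k y) x = (\<Sum>k\<in>S. pd i (f k) x * (\<Prod>j\<in>S - {k}. f j x))"
  using pd_hd[OF has_derivative_prod[of S f "\<lambda>k. frechet_derivative (f k) (at x)", OF fd_works[OF assms]]]
  by (simp add: pd_def)

lemma differentiable_prod:
  fixes f :: "'k \<Rightarrow> real^'n::finite \<Rightarrow> real"
  assumes "\<And>k. k \<in> S \<Longrightarrow> f k differentiable (at x)"
  shows "(\<lambda>y. \<Prod>k\<in>S. f k y) differentiable (at x)"
  using has_derivative_prod[of S f "\<lambda>k. frechet_derivative (f k) (at x)", OF fd_works[OF assms]]
  unfolding differentiable_def by blast

lemma pd_cong:
  assumes "open U" "x \<in> U" "\<And>y. y \<in> U \<Longrightarrow> f y = g y"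
  shows "pd i f x = pd i g x"
proof -
  have "(\<lambda>D. (f has_derivative D) (at x)) = (\<lambda>D. (g has_derivative D) (at x))"
    using has_derivative_transform_within_open[of f _ x UNIV U g]
      has_derivative_transform_within_open[of g _ x UNIV U f] assms by (auto intro!: ext)
  then show ?thesis unfolding pd_def frechet_derivative_def by simp
qed

lemma diff_cong:
  assumes "open U" "x \<in> U" "\<And>y. y \<in> U \<Longrightarrow> f y = g y" "f differentiable (at x)"
  shows "g differentiable (at x)"
  using assms has_derivative_transform_within_open[of f _ x UNIV U g]
  unfolding differentiable_def by blast

lemma pd_sqrt:
  fixes f :: "real^'n::finite \<Rightarrow> real"
  assumes "f differentiable (at x)" "f x \<noteq> 0"
  shows "(\<lambda>y. sqrt (f y)) differentiable (at x)"
    "pd i (\<lambda>y. sqrt (f y)) x = pd i f x * sgn (f x) / (2 * sqrt (f x))"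
proof -
  let ?D = "sgn (f x) / (2 * sqrt (f x))"
  have "DERIV sqrt (f x) :> ?D"
    by (rule DERIV_real_sqrt_generic) (use assms(2) in \<open>auto simp: divide_simps\<close>)
  then have h: "((\<lambda>y. sqrt (f y)) has_derivative (\<lambda>h. ?D * frechet_derivative f (at x) h)) (at x)"
    using has_derivative_compose[OF fd_works[OF assms(1)], of sqrt "(*) ?D"]
    by (simp add: has_field_derivative_def o_def mult.commute)
  show "(\<lambda>y. sqrt (f y)) differentiable (at x)" using h unfolding differentiable_def by blast
  show "pd i (\<lambda>y. sqrt (f y)) x = pd i f x * sgn (f x) / (2 * sqrt (f x))"
    using pd_hd[OF h] by (simp add: pd_def)
qed


definition mdf :: "(real^'n::finite \<Rightarrow> real^'n^'n) \<Rightarrow> real^'n \<Rightarrow> bool" where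
  "mdf M x \<longleftrightarrow> (\<forall>a b. (\<lambda>y. M y $ a $ b) differentiable (at x))"

definition md :: "'n::finite \<Rightarrow> (real^'n \<Rightarrow> real^'n^'n) \<Rightarrow> real^'n \<Rightarrow> real^'n^'n" where
  "md i M x = (\<chi> a b. pd i (\<lambda>y. M y $ a $ b) x)"

lemma mdfD: "mdf M x \<Longrightarrow> (\<lambda>y. M y $ a $ b) differentiable (at x)"
  by (simp add: mdf_def)

lemma mdf_const: "mdf (\<lambda>y. C) x" by (simp add: mdf_def)
lemma md_const: "md i (\<lambda>y. C) x = 0" by (simp add: md_def vec_eq_iff)

lemma mdf_add: "mdf M x \<Longrightarrow> mdf N x \<Longrightarrow> mdf (\<lambda>y. M y + N y) x"
  by (simp add: mdf_def)
lemma md_add: "mdf M x \<Longrightarrow> mdf N x \<Longrightarrow> md i (\<lambda>y. M y + N y) x = md i M x + md i N x"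
  by (simp add: md_def vec_eq_iff pd_add mdfD)

lemma mdf_diff: "mdf M x \<Longrightarrow> mdf N x \<Longrightarrow> mdf (\<lambda>y. M y - N y) x"
  by (simp add: mdf_def)
lemma md_diff: "mdf M x \<Longrightarrow> mdf N x \<Longrightarrow> md i (\<lambda>y. M y - N y) x = md i M x - md i N x"
  by (simp add: md_def vec_eq_iff pd_diff mdfD)

lemma mdf_uminus: "mdf M x \<Longrightarrow> mdf (\<lambda>y. - M y) x"
  by (simp add: mdf_def)
lemma md_uminus: "mdf M x \<Longrightarrow> md i (\<lambda>y. - M y) x = - md i M x"
  by (simp add: md_def vec_eq_iff pd_minus mdfD)

lemma mdf_transpose: "mdf M x \<Longrightarrow> mdf (\<lambda>y. transpose (M y)) x"
  by (simp add: mdf_def transpose_def)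
lemma md_transpose: "md i (\<lambda>y. transpose (M y)) x = transpose (md i M x)"
  by (simp add: md_def vec_eq_iff transpose_def)

lemma mdf_scale: "c differentiable (at x) \<Longrightarrow> mdf M x \<Longrightarrow> mdf (\<lambda>y. c y *\<^sub>R M y) x"
  by (simp add: mdf_def)
lemma md_scale: "c differentiable (at x) \<Longrightarrow> mdf M x \<Longrightarrow>
   md i (\<lambda>y. c y *\<^sub>R M y) x = pd i c x *\<^sub>R M x + c x *\<^sub>R md i M x"
  by (simp add: md_def vec_eq_iff pd_mult mdfD)

lemma mdf_mult: "mdf M x \<Longrightarrow> mdf N x \<Longrightarrow> mdf (\<lambda>y. M y ** N y) x"
  by (simp add: mdf_def matrix_matrix_mult_def mdfD)

lemma md_mult: "mdf M x \<Longrightarrow> mdf N x \<Longrightarrow>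
   md i (\<lambda>y. M y ** N y) x = md i M x ** N x + M x ** md i N x" (is "_ \<Longrightarrow> _ \<Longrightarrow> ?thesis")
proof -
  assume M: "mdf M x" and N: "mdf N x"
  have "md i (\<lambda>y. M y ** N y) x $ a $ b = (md i M x ** N x + M x ** md i N x) $ a $ b" for a b
  proof -
    have "md i (\<lambda>y. M y ** N y) x $ a $ b = pd i (\<lambda>y. \<Sum>k\<in>UNIV. M y $ a $ k * N y $ k $ b) x"
      by (simp add: md_def matrix_matrix_mult_def)
    also have "\<dots> = (\<Sum>k\<in>UNIV. pd i (\<lambda>y. M y $ a $ k * N y $ k $ b) x)"
      by (rule pd_sum) (intro differentiable_mult mdfD[OF M] mdfD[OF N])
    also have "\<dots> = (\<Sum>k\<in>UNIV. pd i (\<lambda>y. M y $ a $ k) x * N x $ k $ b + M x $ a $ k * pd i (\<lambda>y. N y $ k $ b) x)"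
      by (intro sum.cong refl pd_mult mdfD[OF M] mdfD[OF N])
    also have "\<dots> = (md i M x ** N x + M x ** md i N x) $ a $ b"
      by (simp add: md_def matrix_matrix_mult_def sum.distrib)
    finally show ?thesis .
  qed
  then show ?thesis by (simp add: vec_eq_iff)
qed

lemma md_cong:
  assumes "open U" "x \<in> U" "\<And>y. y \<in> U \<Longrightarrow> M y = N y"
  shows "md i M x = md i N x"
proof -
  have "\<And>a b. pd i (\<lambda>y. M y $ a $ b) x = pd i (\<lambda>y. N y $ a $ b) x"
    by (rule pd_cong[OF assms(1,2)]) (simp add: assms(3))
  then show ?thesis by (simp add: md_def)
qed

lemma mdf_cong:
  assumes "open U" "x \<in> U" "\<And>y. y \<in> U \<Longrightarrow> M y = N y" "mdf M x"
  shows "mdf N x"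
proof -
  have "(\<lambda>y. N y $ a $ b) differentiable (at x)" for a b
    using diff_cong[OF assms(1,2), of "\<lambda>y. M y $ a $ b" "\<lambda>y. N y $ a $ b"] assms(3) mdfD[OF assms(4)]
    by simp
  then show ?thesis by (simp add: mdf_def)
qed

lemma det_differentiable:
  assumes "mdf M x"
  shows "(\<lambda>y. det (M y)) differentiable (at x)"
  unfolding det_def
  by (intro differentiable_sum ballI differentiable_mult differentiable_const differentiable_prod mdfD[OF assms]) simp


lemma pd_det_rows:
  assumes "mdf M x"
  shows "pd i (\<lambda>y. det (M y)) x =
    (\<Sum>r\<in>UNIV. det (\<chi> j. if j = r then md i M x $ r else M x $ j))"
proof -
  let ?P = "{p. p permutes (UNIV::'a set)}"
  have dp: "\<And>p. (\<lambda>y. \<Prod>r\<in>UNIV. M y $ r $ p r) differentiable (at x)"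
    by (rule differentiable_prod) (rule mdfD[OF assms])
  have "pd i (\<lambda>y. det (M y)) x =
     (\<Sum>p\<in>?P. of_int (sign p) * pd i (\<lambda>y. \<Prod>r\<in>UNIV. M y $ r $ p r) x)"
    unfolding det_def
    by (subst pd_sum) (auto intro!: sum.cong differentiable_mult dp simp: pd_cmult[OF dp])
  also have "\<dots> = (\<Sum>p\<in>?P. of_int (sign p) * (\<Sum>r\<in>UNIV. md i M x $ r $ p r * (\<Prod>j\<in>UNIV - {r}. M x $ j $ p j)))"
    by (intro sum.cong refl) (simp add: pd_prod mdfD[OF assms] md_def)
  also have "\<dots> = (\<Sum>r\<in>UNIV. \<Sum>p\<in>?P. of_int (sign p) * (\<Prod>j\<in>UNIV. (\<chi> j. if j = r then md i M x $ r else M x $ j) $ j $ p j))"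
  proof -
    have "\<And>p r. (\<Prod>j\<in>UNIV. (\<chi> j. if j = r then md i M x $ r else M x $ j) $ j $ p j)
        = md i M x $ r $ p r * (\<Prod>j\<in>UNIV - {r}. M x $ j $ p j)"
    proof -
      fix p r
      have "(\<Prod>j\<in>UNIV. (\<chi> j. if j = r then md i M x $ r else M x $ j) $ j $ p j)
         = (\<chi> j. if j = r then md i M x $ r else M x $ j) $ r $ p r *
           (\<Prod>j\<in>UNIV - {r}. (\<chi> j. if j = r then md i M x $ r else M x $ j) $ j $ p j)"
        by (rule prod.remove) auto
      also have "\<dots> = md i M x $ r $ p r * (\<Prod>j\<in>UNIV - {r}. M x $ j $ p j)"
        by (auto intro!: prod.cong)
      finally show "?thesis p r" .
    qed
    then show ?thesis
      by (simp add: sum_distrib_left mult.assoc) (rule sum.swap)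
  qed
  finally show ?thesis unfolding det_def by simp
qed

lemma det_replace_row:
  fixes M D :: "real^'n^'n"
  assumes "invertible M"
  shows "det (\<chi> j. if j = r then D $ r else M $ j) = det M * (D ** matrix_inv M) $ r $ r"
proof -
  let ?C = "D ** matrix_inv M"
  have Dr: "D $ r = (\<Sum>k\<in>UNIV. ?C $ r $ k *s M $ k)"
  proof -
    have "D = ?C ** M" using minv_works[OF assms] by (simp add: matrix_mul_assoc[symmetric])
    then have "D $ r = (?C ** M) $ r" by simp
    also have "\<dots> = (\<Sum>k\<in>UNIV. ?C $ r $ k *s M $ k)"
      by (simp add: vec_eq_iff matrix_matrix_mult_def sum_component)
    finally show ?thesis .
  qed
  have "det (\<chi> j. if j = r then D $ r else M $ j) =
      (\<Sum>k\<in>UNIV. det (\<chi> j. if j = r then ?C $ r $ k *s M $ k else M $ j))"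
    unfolding Dr by (rule det_linear_row_sum) simp
  also have "\<dots> = (\<Sum>k\<in>UNIV. ?C $ r $ k * det (\<chi> j. if j = r then M $ k else M $ j))"
    by (simp add: det_row_mul)
  also have "\<dots> = ?C $ r $ r * det (\<chi> j. if j = r then M $ r else M $ j)"
  proof -
    have "(\<Sum>k\<in>UNIV. ?C $ r $ k * det (\<chi> j. if j = r then M $ k else M $ j))
       = ?C $ r $ r * det (\<chi> j. if j = r then M $ r else M $ j) +
         (\<Sum>k\<in>UNIV - {r}. ?C $ r $ k * det (\<chi> j. if j = r then M $ k else M $ j))"
      by (rule sum.remove) auto
    also have "(\<Sum>k\<in>UNIV - {r}. ?C $ r $ k * det (\<chi> j. if j = r then M $ k else M $ j)) = 0"
    proof (rule sum.neutral, rule ballI)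
      fix k assume k: "k \<in> UNIV - {r}"
      have "det (\<chi> j. if j = r then M $ k else M $ j) = 0"
        by (rule det_identical_rows[of r k]) (use k in \<open>auto simp: row_def vec_eq_iff\<close>)
      then show "?C $ r $ k * det (\<chi> j. if j = r then M $ k else M $ j) = 0" by simp
    qed
    finally show ?thesis by simp
  qed
  also have "(\<chi> j. if j = r then M $ r else M $ j) = M" by (simp add: vec_eq_iff)
  finally show ?thesis by (simp only: mult.commute)
qed

lemma pd_det:
  assumes "mdf M x" "invertible (M x)"
  shows "pd i (\<lambda>y. det (M y)) x = det (M x) * trace (matrix_inv (M x) ** md i M x)"
proof -
  have "pd i (\<lambda>y. det (M y)) x = (\<Sum>r\<in>UNIV. det (M x) * (md i M x ** matrix_inv (M x)) $ r $ r)"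
    unfolding pd_det_rows[OF assms(1)] by (simp add: det_replace_row[OF assms(2)])
  also have "\<dots> = det (M x) * trace (md i M x ** matrix_inv (M x))"
    by (simp add: trace_def sum_distrib_left)
  finally show ?thesis using trace_mul_sym[of "md i M x" "matrix_inv (M x)"] by simp
qed


lemma mm_add_r: "((A::real^'n^'m) + B) ** C = A ** C + B ** C"
  by (simp add: matrix_matrix_mult_def vec_eq_iff sum.distrib distrib_right)
lemma mm_diff_l: "(A::real^'n^'m) ** (B - C) = A ** B - A ** C"
  by (simp add: matrix_matrix_mult_def vec_eq_iff sum_subtractf right_diff_distrib)
lemma mm_diff_r: "((A::real^'n^'m) - B) ** C = A ** C - B ** C"
  by (simp add: matrix_matrix_mult_def vec_eq_iff sum_subtractf left_diff_distrib)
lemma mm_neg_l: "(- (A::real^'n^'m)) ** B = - (A ** B)"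
  by (simp add: matrix_matrix_mult_def vec_eq_iff sum_negf)
lemma mm_neg_r: "(A::real^'n^'m) ** (- B) = - (A ** B)"
  by (simp add: matrix_matrix_mult_def vec_eq_iff sum_negf)
lemma mm_scale_l: "(c *\<^sub>R (A::real^'n^'m)) ** B = c *\<^sub>R (A ** B)"
  by (simp add: matrix_matrix_mult_def vec_eq_iff sum_distrib_left mult.assoc)
lemma mm_scale_r: "(A::real^'n^'m) ** (c *\<^sub>R B) = c *\<^sub>R (A ** B)"
  by (simp add: matrix_matrix_mult_def vec_eq_iff sum_distrib_left mult.left_commute)
lemma mm_zero_l: "(0::real^'n^'m) ** B = 0"
  by (simp add: matrix_matrix_mult_def vec_eq_iff)
lemma mm_zero_r: "(A::real^'n^'m) ** (0::real^'k^'n) = 0"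
  by (simp add: matrix_matrix_mult_def vec_eq_iff)
lemma tr_add: "transpose ((A::real^'n^'m) + B) = transpose A + transpose B"
  by (simp add: transpose_def vec_eq_iff)
lemma tr_diff: "transpose ((A::real^'n^'m) - B) = transpose A - transpose B"
  by (simp add: transpose_def vec_eq_iff)
lemma tr_neg: "transpose (- (A::real^'n^'m)) = - transpose A"
  by (simp add: transpose_def vec_eq_iff)
lemma tr_scale: "transpose (c *\<^sub>R (A::real^'n^'m)) = c *\<^sub>R transpose A"
  by (simp add: transpose_def vec_eq_iff)
lemma tr_mult: "transpose ((A::real^'n^'m) ** B) = transpose B ** transpose A"
  by (rule matrix_transpose_mul)
lemma tr_zero: "transpose (0::real^'n^'m) = 0"
  by (simp add: transpose_def vec_eq_iff)

lemmas mm_simps = matrix_add_ldistrib mm_add_r mm_diff_l mm_diff_r mm_neg_l mm_neg_r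
  mm_scale_l mm_scale_r mm_zero_l mm_zero_r tr_add tr_diff tr_neg tr_scale tr_mult tr_zero
  matrix_mul_lid matrix_mul_rid transpose_transpose transpose_mat

lemma trace_scale: "trace (c *\<^sub>R (A::real^'n^'n)) = c * trace A"
  by (simp add: trace_def sum_distrib_left)
lemma trace_neg: "trace (- (A::real^'n^'n)) = - trace A"
  by (simp add: trace_def sum_negf)
lemma trace_transpose: "trace (transpose (A::real^'n^'n)) = trace A"
  by (simp add: trace_def transpose_def)

lemma trace_sym_skew:
  fixes P F :: "real^'n^'n"
  assumes "transpose P = P" "transpose F = - F"
  shows "trace (P ** F) = 0"
proof -
  have "trace (P ** F) = trace (transpose (P ** F))" by (simp add: trace_transpose)
  also have "\<dots> = trace (transpose F ** transpose P)" by (simp add: tr_mult)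
  also have "\<dots> = - trace (F ** P)" using assms by (simp add: mm_neg_l trace_neg)
  also have "\<dots> = - trace (P ** F)" using trace_mul_sym[of F P] by simp
  finally show ?thesis by simp
qed

lemma skew_quad:
  fixes S :: "real^'n^'n"
  assumes "transpose S = - S"
  shows "u \<bullet> (S *v u) = 0"
proof -
  have "u \<bullet> (S *v u) = (u v* S) \<bullet> u" by (simp add: dot_lmul_matrix)
  also have "\<dots> = (transpose S *v u) \<bullet> u" by simp
  also have "transpose S *v u = - (S *v u)" using assms
    by (simp add: matrix_vector_mult_def vec_eq_iff sum_negf)
  also have "(- (S *v u)) \<bullet> u = - (u \<bullet> (S *v u))" by (simp add: inner_commute)
  finally show ?thesis by simp
qed


lemma minv_cramer:
  fixes A :: "real^'n^'n"
  assumes "invertible A"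
  shows "matrix_inv A $ k $ c = det (\<chi> i j. if j = k then axis c 1 $ i else A $ i $ j) / det A"
proof -
  let ?x = "matrix_inv A *v axis c 1"
  have "A *v ?x = axis c 1" using minv_works[OF assms]
    by (simp add: matrix_vector_mul_assoc)
  moreover have "det A \<noteq> 0" using assms invertible_det_nz by blast
  ultimately have "?x = (\<chi> k. det (\<chi> i j. if j = k then axis c 1 $ i else A $ i $ j) / det A)"
    using cramer by blast
  then have "?x $ k = det (\<chi> i j. if j = k then axis c 1 $ i else A $ i $ j) / det A" by simp
  moreover have "?x $ k = matrix_inv A $ k $ c"
    by (simp add: matrix_vector_mult_def axis_def if_distrib cong: if_cong)
  ultimately show ?thesis by simp
qed

lemma mdf_inv:
  assumes U: "open U" "x \<in> U" and inv: "\<And>y. y \<in> U \<Longrightarrow> invertible (M y)" and M: "mdf M x"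
  shows "mdf (\<lambda>y. matrix_inv (M y)) x"
proof -
  have "(\<lambda>y. matrix_inv (M y) $ k $ c) differentiable (at x)" for k c
  proof -
    let ?N = "\<lambda>y. (\<chi> i j. if j = k then axis c 1 $ i else M y $ i $ j) :: real^'a^'a"
    have "mdf ?N x" unfolding mdf_def
    proof (intro allI)
      fix i j show "(\<lambda>y. ?N y $ i $ j) differentiable (at x)"
        by (cases "j = k") (simp_all add: mdfD[OF M])
    qed
    then have "(\<lambda>y. det (?N y) / det (M y)) differentiable (at x)"
      using det_differentiable[OF M] det_differentiable inv[OF U(2)] invertible_det_nz
      by (intro differentiable_divide) auto
    moreover have "\<And>y. y \<in> U \<Longrightarrow> det (?N y) / det (M y) = matrix_inv (M y) $ k $ c"
      using minv_cramer[OF inv] by simp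
    ultimately show ?thesis
      using diff_cong[OF U(1) U(2), of "\<lambda>y. det (?N y) / det (M y)" "\<lambda>y. matrix_inv (M y) $ k $ c"]
      by blast
  qed
  then show ?thesis by (simp add: mdf_def)
qed

lemma md_inv:
  assumes U: "open U" "x \<in> U" and inv: "\<And>y. y \<in> U \<Longrightarrow> invertible (M y)" and M: "mdf M x"
  shows "md i (\<lambda>y. matrix_inv (M y)) x = - (matrix_inv (M x) ** md i M x ** matrix_inv (M x))"
proof -
  let ?N = "\<lambda>y. matrix_inv (M y)"
  have N: "mdf ?N x" by (rule mdf_inv[OF U inv M])
  have "md i (\<lambda>y. M y ** ?N y) x = md i (\<lambda>y. mat 1) x"
    by (rule md_cong[OF U]) (simp add: minv_works[OF inv])
  then have "md i M x ** ?N x + M x ** md i ?N x = 0"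
    by (simp add: md_mult[OF M N] md_const)
  then have "?N x ** (md i M x ** ?N x + M x ** md i ?N x) = 0"
    by (simp add: mm_zero_r)
  then have "?N x ** md i M x ** ?N x + md i ?N x = 0"
    by (simp add: matrix_add_ldistrib matrix_mul_assoc minv_works[OF inv[OF U(2)]])
  then show ?thesis by (simp add: eq_neg_iff_add_eq_0 add.commute)
qed


lemma smooth_diff: "smooth_on U f \<Longrightarrow> x \<in> U \<Longrightarrow> f differentiable (at x)"
  unfolding smooth_on_def using pds.simps(1) by metis

locale setting =
  fixes U :: "(real^'n::finite) set" and g b :: "real^'n \<Rightarrow> real^'n^'n"
  assumes U: "open U" and gm: "riem_metric_on U g" and bt: "two_form_on U b"
begin

lemma g_sym: "y \<in> U \<Longrightarrow> transpose (g y) = g y"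
  using gm by (simp add: riem_metric_on_def)
lemma g_pos: "y \<in> U \<Longrightarrow> u \<noteq> 0 \<Longrightarrow> u \<bullet> (g y *v u) > 0"
  using gm by (simp add: riem_metric_on_def)
lemma g_nonneg: "y \<in> U \<Longrightarrow> u \<bullet> (g y *v u) \<ge> 0"
  using g_pos[of y u] by (cases "u = 0") auto
lemma b_skew: "y \<in> U \<Longrightarrow> transpose (b y) = - b y"
  using bt by (simp add: two_form_on_def)

lemma g_inv: "y \<in> U \<Longrightarrow> invertible (g y)"
  by (rule ker_invertible) (use g_pos in fastforce)

lemma h_sym: assumes "y \<in> U" shows "transpose (matrix_inv (g y)) = matrix_inv (g y)"
proof -
  have "transpose (matrix_inv (g y)) ** g y = mat 1"
    using minv_works(1)[OF g_inv[OF assms]] g_sym[OF assms]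
    by (metis matrix_transpose_mul transpose_mat)
  then show ?thesis using minv_unique by metis
qed

lemma gB: "y \<in> U \<Longrightarrow> g y ** bsharp g b y = transpose (b y)"
  by (simp add: bsharp_def matrix_mul_assoc minv_works[OF g_inv])

lemma G_inv: assumes y: "y \<in> U" shows "invertible (Gb g b y)"
proof (rule ker_invertible)
  fix u assume u: "Gb g b y *v u = 0"
  let ?B = "bsharp g b y" and ?S = "transpose (b y)"
  have S: "transpose ?S = - ?S" using b_skew[OF y] by (simp add: tr_neg)
  have uBB: "u = ?B *v (?B *v u)" using u
    by (simp add: Gb_def matrix_vector_mult_diff_rdistrib matrix_vector_mul_assoc)
  have "u \<bullet> (g y *v u) = u \<bullet> (g y *v (?B *v (?B *v u)))" using uBB by simp
  also have "\<dots> = u \<bullet> (?S *v (?B *v u))"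
    by (simp add: matrix_vector_mul_assoc matrix_mul_assoc gB[OF y])
  also have "\<dots> = (u v* ?S) \<bullet> (?B *v u)" by (rule dot_lmul_matrix[symmetric])
  also have "u v* ?S = - (?S *v u)" using S
    by (metis matrix_vector_mult_def vector_transpose_matrix transpose_transpose neg_equal_iff_equal
        matrix_vector_mult_0 matrix_vector_mult_diff_rdistrib diff_0)
  also have "?S *v u = g y *v (?B *v u)" by (simp add: matrix_vector_mul_assoc gB[OF y])
  also have "(- (g y *v (?B *v u))) \<bullet> (?B *v u) = - ((?B *v u) \<bullet> (g y *v (?B *v u)))"
    by (simp add: inner_commute)
  finally have "u \<bullet> (g y *v u) \<le> 0" using g_nonneg[OF y, of "?B *v u"] by simp
  then show "u = 0" using g_pos[OF y, of u] by fastforce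
qed

lemma IB_inv: assumes y: "y \<in> U" shows "invertible (mat 1 + bsharp g b y)"
proof (rule ker_invertible)
  fix u assume u: "(mat 1 + bsharp g b y) *v u = 0"
  let ?B = "bsharp g b y" and ?S = "transpose (b y)"
  have S: "transpose ?S = - ?S" using b_skew[OF y] by (simp add: tr_neg)
  have "u = - (?B *v u)" using u
    by (simp add: matrix_vector_mult_add_rdistrib eq_neg_iff_add_eq_0)
  then have "u \<bullet> (g y *v u) = - (u \<bullet> (g y *v (?B *v u)))"
    by (metis inner_minus_right matrix_vector_mult_0_right matrix_vector_mult_diff_distrib diff_0)
  also have "u \<bullet> (g y *v (?B *v u)) = u \<bullet> (?S *v u)"
    by (simp add: matrix_vector_mul_assoc gB[OF y])
  also have "\<dots> = 0" by (rule skew_quad[OF S])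
  finally show "u = 0" using g_pos[OF y, of u] by fastforce
qed

end


context setting
begin

lemma mdf_g: "x \<in> U \<Longrightarrow> mdf g x"
  using gm smooth_diff unfolding riem_metric_on_def smooth_matrix_on_def mdf_def by blast
lemma mdf_b: "x \<in> U \<Longrightarrow> mdf b x"
  using bt smooth_diff unfolding two_form_on_def smooth_matrix_on_def mdf_def by blast

lemma mdf_h: "x \<in> U \<Longrightarrow> mdf (\<lambda>y. matrix_inv (g y)) x"
  by (rule mdf_inv[OF U _ g_inv mdf_g])
lemma md_h: "x \<in> U \<Longrightarrow> md i (\<lambda>y. matrix_inv (g y)) x =
   - (matrix_inv (g x) ** md i g x ** matrix_inv (g x))"
  by (rule md_inv[OF U _ g_inv mdf_g])

lemma bsharp_fun: "bsharp g b = (\<lambda>y. matrix_inv (g y) ** transpose (b y))"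
  by (simp add: bsharp_def fun_eq_iff)

lemma mdf_B: "x \<in> U \<Longrightarrow> mdf (bsharp g b) x"
  unfolding bsharp_fun by (intro mdf_mult mdf_h mdf_transpose mdf_b)
lemma md_B: "x \<in> U \<Longrightarrow> md i (bsharp g b) x =
   md i (\<lambda>y. matrix_inv (g y)) x ** transpose (b x) + matrix_inv (g x) ** transpose (md i b x)"
  unfolding bsharp_fun
  by (simp add: md_mult mdf_h mdf_transpose mdf_b md_transpose)

lemma Gb_fun: "Gb g b = (\<lambda>y. mat 1 - bsharp g b y ** bsharp g b y)"
  by (simp add: Gb_def fun_eq_iff)

lemma mdf_G: "x \<in> U \<Longrightarrow> mdf (Gb g b) x"
  unfolding Gb_fun by (intro mdf_diff mdf_const mdf_mult mdf_B)
lemma md_G: "x \<in> U \<Longrightarrow> md i (Gb g b) x =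
   - (md i (bsharp g b) x ** bsharp g b x + bsharp g b x ** md i (bsharp g b) x)"
  unfolding Gb_fun
  by (simp add: md_diff mdf_const mdf_mult mdf_B md_const md_mult[of "bsharp g b" x "bsharp g b", simplified])

lemma mdf_K: "x \<in> U \<Longrightarrow> mdf (\<lambda>y. matrix_inv (Gb g b y)) x"
  by (rule mdf_inv[OF U _ G_inv mdf_G])
lemma md_K: "x \<in> U \<Longrightarrow> md i (\<lambda>y. matrix_inv (Gb g b y)) x =
   - (matrix_inv (Gb g b x) ** md i (Gb g b) x ** matrix_inv (Gb g b x))"
  by (rule md_inv[OF U _ G_inv mdf_G])

lemma IB_fun_mdf: "x \<in> U \<Longrightarrow> mdf (\<lambda>y. mat 1 + bsharp g b y) x"
  by (rule mdf_add[OF mdf_const mdf_B])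

lemma det_IB_nz: "y \<in> U \<Longrightarrow> det (mat 1 + bsharp g b y) \<noteq> 0"
  using IB_inv invertible_det_nz by blast

lemma vg_diff: "x \<in> U \<Longrightarrow> vg g b differentiable (at x)"
proof -
  assume x: "x \<in> U"
  have "(\<lambda>y. sqrt (det (mat 1 + bsharp g b y))) differentiable (at x)"
    by (rule pd_sqrt(1)[OF det_differentiable[OF IB_fun_mdf[OF x]] det_IB_nz[OF x]])
  then show ?thesis by (simp add: vg_def[abs_def])
qed

lemma pd_vg: assumes x: "x \<in> U"
  shows "pd i (vg g b) x = vg g b x / 2 *
     trace (matrix_inv (mat 1 + bsharp g b x) ** md i (bsharp g b) x)"
proof -
  let ?d = "det (mat 1 + bsharp g b x)"
  let ?t = "trace (matrix_inv (mat 1 + bsharp g b x) ** md i (bsharp g b) x)"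
  have mdI: "md i (\<lambda>y. mat 1 + bsharp g b y) x = md i (bsharp g b) x"
    using md_add[OF mdf_const mdf_B[OF x]] by (simp add: md_const)
  have vf: "vg g b = (\<lambda>y. sqrt (det (mat 1 + bsharp g b y)))" by (simp add: vg_def fun_eq_iff)
  have "pd i (vg g b) x = pd i (\<lambda>y. det (mat 1 + bsharp g b y)) x * sgn ?d / (2 * sqrt ?d)"
    unfolding vf by (rule pd_sqrt(2)[OF det_differentiable[OF IB_fun_mdf[OF x]] det_IB_nz[OF x]])
  also have "pd i (\<lambda>y. det (mat 1 + bsharp g b y)) x = ?d * ?t"
    using pd_det[OF IB_fun_mdf[OF x] IB_inv[OF x]] mdI by simp
  also have "?d * ?t * sgn ?d / (2 * sqrt ?d) = (?d * sgn ?d) * ?t / (2 * sqrt ?d)" by simp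
  also have "?d * sgn ?d = sqrt ?d * sqrt ?d"
    by (cases "?d > 0") (auto simp: sgn_if)
  also have "sqrt ?d * sqrt ?d * ?t / (2 * sqrt ?d) = sqrt ?d / 2 * ?t"
    using det_IB_nz[OF x] by (simp add: field_simps)
  finally show ?thesis unfolding vf by simp
qed

lemma stress_fun: "stress g b = (\<lambda>y. - g y + vg g b y *\<^sub>R (transpose (matrix_inv (Gb g b y)) ** g y))"
  by (simp add: stress_def end_flat_def fun_eq_iff)

lemma md_S: assumes x: "x \<in> U"
  shows "md i (stress g b) x = - md i g x + pd i (vg g b) x *\<^sub>R (transpose (matrix_inv (Gb g b x)) ** g x)
     + vg g b x *\<^sub>R (transpose (md i (\<lambda>y. matrix_inv (Gb g b y)) x) ** g x
        + transpose (matrix_inv (Gb g b x)) ** md i g x)"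
proof -
  have m1: "mdf (\<lambda>y. transpose (matrix_inv (Gb g b y)) ** g y) x"
    by (intro mdf_mult mdf_transpose mdf_K mdf_g x)
  have "md i (stress g b) x = md i (\<lambda>y. - g y) x +
      md i (\<lambda>y. vg g b y *\<^sub>R (transpose (matrix_inv (Gb g b y)) ** g y)) x"
    unfolding stress_fun by (rule md_add[OF mdf_uminus[OF mdf_g[OF x]] mdf_scale[OF vg_diff[OF x] m1]])
  also have "md i (\<lambda>y. - g y) x = - md i g x" by (rule md_uminus[OF mdf_g[OF x]])
  also have "md i (\<lambda>y. vg g b y *\<^sub>R (transpose (matrix_inv (Gb g b y)) ** g y)) x
     = pd i (vg g b) x *\<^sub>R (transpose (matrix_inv (Gb g b x)) ** g x) +
       vg g b x *\<^sub>R md i (\<lambda>y. transpose (matrix_inv (Gb g b y)) ** g y) x"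
    by (rule md_scale[OF vg_diff[OF x] m1])
  also have "md i (\<lambda>y. transpose (matrix_inv (Gb g b y)) ** g y) x =
     transpose (md i (\<lambda>y. matrix_inv (Gb g b y)) x) ** g x
        + transpose (matrix_inv (Gb g b x)) ** md i g x"
    by (simp add: md_mult[OF mdf_transpose[OF mdf_K[OF x]] mdf_g[OF x]] md_transpose)
  finally show ?thesis by (simp add: add.assoc)
qed

end

locale alg =
  fixes g0 h \<beta> :: "real^'n::finite^'n" and \<Gamma> dg d\<beta> :: "'n \<Rightarrow> real^'n^'n" and v :: real
    and E :: "'n \<Rightarrow> real^'n"
  assumes hg: "h ** g0 = mat 1" and gh: "g0 ** h = mat 1"
    and gs: "transpose g0 = g0" and hs: "transpose h = h"
    and \<beta>s: "transpose \<beta> = - \<beta>" and d\<beta>s: "\<And>i. transpose (d\<beta> i) = - d\<beta> i"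
    and dgG: "\<And>i. dg i = transpose (\<Gamma> i) ** g0 + g0 ** \<Gamma> i"
    and \<Gamma>s: "\<And>i j m. \<Gamma> i $ m $ j = \<Gamma> j $ m $ i"
    and Kinv: "matrix_inv (mat 1 - (h ** transpose \<beta>) ** (h ** transpose \<beta>)) **
                 (mat 1 - (h ** transpose \<beta>) ** (h ** transpose \<beta>)) = mat 1"
    and Linv: "matrix_inv (mat 1 + h ** transpose \<beta>) ** (mat 1 + h ** transpose \<beta>) = mat 1"
    and frame: "\<And>i j. (\<Sum>k\<in>UNIV. E k $ i * E k $ j) = h $ i $ j"
begin

definition "B = h ** transpose \<beta>"
definition "G = mat 1 - B ** B"
definition "K = matrix_inv G"
definition "L = matrix_inv (mat 1 + B)"
definition "Sm = g0 ** B"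

lemma KG: "K ** G = mat 1" using Kinv by (simp add: K_def G_def B_def)
lemma GK: "G ** K = mat 1" using KG matrix_left_right_inverse by blast
lemma LI: "L ** (mat 1 + B) = mat 1" using Linv by (simp add: L_def B_def)
lemma IL: "(mat 1 + B) ** L = mat 1" using LI matrix_left_right_inverse by blast

lemma Sm_eq: "Sm = transpose \<beta>"
  by (simp add: Sm_def B_def matrix_mul_assoc gh)
lemma Sm_skew: "transpose Sm = - Sm"
  by (simp add: Sm_eq \<beta>s tr_neg)
lemma B_hS: "B = h ** Sm"
  by (simp add: Sm_eq B_def)
lemma BT: "transpose B = - (Sm ** h)"
  by (simp add: B_hS tr_mult hs Sm_skew mm_neg_l)

lemma BG: "B ** G = G ** B"
  by (simp add: G_def mm_diff_l mm_diff_r matrix_mul_assoc)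
lemma BK: "B ** K = K ** B"
proof -
  have "K ** B = K ** B ** (G ** K)" by (simp add: GK)
  also have "\<dots> = K ** (B ** G) ** K" by (simp add: matrix_mul_assoc)
  also have "\<dots> = K ** (G ** B) ** K" by (simp add: BG)
  also have "\<dots> = (K ** G) ** B ** K" by (simp add: matrix_mul_assoc)
  also have "\<dots> = B ** K" by (simp add: KG)
  finally show ?thesis by simp
qed

lemma L_eq: "L = (mat 1 - B) ** K"
proof -
  have "(mat 1 + B) ** ((mat 1 - B) ** K) = G ** K"
    by (simp add: G_def mm_add_r mm_diff_l mm_diff_r matrix_mul_assoc)
  then have e: "(mat 1 + B) ** ((mat 1 - B) ** K) = mat 1" by (simp add: GK)
  have "L = L ** ((mat 1 + B) ** ((mat 1 - B) ** K))" by (simp add: e)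
  also have "\<dots> = (L ** (mat 1 + B)) ** ((mat 1 - B) ** K)" by (simp add: matrix_mul_assoc)
  finally show ?thesis by (simp add: LI)
qed

lemma BL: "B ** L = L ** B"
  by (simp add: L_eq mm_diff_l mm_diff_r matrix_mul_assoc BK)

lemma gG_sym: "transpose G ** g0 = g0 ** G"
proof -
  have "transpose (B ** B) ** g0 = Sm ** h ** Sm"
    by (simp add: tr_mult BT mm_neg_l mm_neg_r matrix_mul_assoc[symmetric] hg)
  moreover have "g0 ** (B ** B) = Sm ** h ** Sm" by (simp add: B_hS matrix_mul_assoc gh)
  ultimately have "transpose (B ** B) ** g0 = g0 ** (B ** B)" by simp
  then show ?thesis
    by (simp add: G_def tr_diff mm_diff_l mm_diff_r gs)
qed

lemma KT_g: "transpose K ** g0 = g0 ** K"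
proof -
  have "transpose K ** g0 = transpose K ** g0 ** (G ** K)" by (simp add: GK)
  also have "\<dots> = transpose K ** (g0 ** G) ** K" by (simp add: matrix_mul_assoc)
  also have "\<dots> = transpose K ** (transpose G ** g0) ** K" by (simp add: gG_sym)
  also have "\<dots> = transpose (G ** K) ** g0 ** K" by (simp add: matrix_mul_assoc tr_mult)
  finally show ?thesis by (simp add: GK)
qed

lemma Kh_sym: "transpose (K ** h) = K ** h"
proof -
  have "transpose (K ** h) = h ** transpose K" by (simp add: tr_mult hs)
  also have "\<dots> = h ** (transpose K ** g0) ** h" by (simp add: matrix_mul_assoc[symmetric] gh)
  also have "\<dots> = h ** (g0 ** K) ** h" by (simp add: KT_g)
  also have "\<dots> = K ** h" by (simp add: matrix_mul_assoc hg)
  finally show ?thesis .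
qed

lemma hg_r: "h ** (g0 ** X) = X" by (simp add: matrix_mul_assoc hg)
lemma gh_r: "g0 ** (h ** X) = X" by (simp add: matrix_mul_assoc gh)
lemma KG_r: "K ** (G ** X) = X" by (simp add: matrix_mul_assoc KG)
lemma GK_r: "G ** (K ** X) = X" by (simp add: matrix_mul_assoc GK)

definition "dB i = - (h ** dg i ** h) ** transpose \<beta> + h ** transpose (d\<beta> i)"
definition "dG i = - (dB i ** B + B ** dB i)"
definition "dK i = - (K ** dG i ** K)"
definition "Sx = - g0 + v *\<^sub>R (transpose K ** g0)"
definition "DS i = - dg i + (v / 2 * trace (L ** dB i)) *\<^sub>R (transpose K ** g0)
    + v *\<^sub>R (transpose (dK i) ** g0 + transpose K ** dg i)"
definition "CS i = DS i - transpose (\<Gamma> i) ** Sx - Sx ** \<Gamma> i"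
definition "F i = d\<beta> i - transpose (\<Gamma> i) ** \<beta> - \<beta> ** \<Gamma> i"
definition "C i = h ** transpose (F i)"
definition "t i = trace (L ** C i)"
definition "X i = (t i / 2) *\<^sub>R K + K ** (C i ** B + B ** C i) ** K"

lemma C_eq: "C i = dB i + \<Gamma> i ** B - B ** \<Gamma> i"
  by (simp add: C_def F_def dB_def B_def dgG mm_simps \<beta>s matrix_mul_assoc[symmetric] hg_r gh_r
      algebra_simps)

lemma comm_K: "\<Gamma> i ** K - K ** \<Gamma> i = K ** (\<Gamma> i ** B ** B - B ** B ** \<Gamma> i) ** K"
proof -
  have "\<Gamma> i ** K = K ** (G ** (\<Gamma> i ** K))" by (simp add: KG_r)
  moreover have "K ** \<Gamma> i = K ** (\<Gamma> i ** (G ** K))" by (simp add: GK)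
  ultimately have "\<Gamma> i ** K - K ** \<Gamma> i = K ** (G ** \<Gamma> i - \<Gamma> i ** G) ** K"
    by (simp add: mm_diff_l mm_diff_r matrix_mul_assoc)
  also have "G ** \<Gamma> i - \<Gamma> i ** G = \<Gamma> i ** B ** B - B ** B ** \<Gamma> i"
    by (simp add: G_def mm_diff_l mm_diff_r matrix_mul_assoc)
  finally show ?thesis .
qed

lemma dK_cov: "dK i + \<Gamma> i ** K - K ** \<Gamma> i = K ** (C i ** B + B ** C i) ** K"
proof -
  have "dK i + \<Gamma> i ** K - K ** \<Gamma> i = dK i + (\<Gamma> i ** K - K ** \<Gamma> i)" by simp
  also have "\<dots> = K ** (dB i ** B + B ** dB i) ** K + K ** (\<Gamma> i ** B ** B - B ** B ** \<Gamma> i) ** K"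
    by (simp add: comm_K dK_def dG_def mm_simps)
  also have "\<dots> = K ** (C i ** B + B ** C i) ** K"
    by (simp add: C_eq mm_simps matrix_mul_assoc algebra_simps)
  finally show ?thesis .
qed

lemma trace_dB: "trace (L ** dB i) = t i"
proof -
  have "dB i = C i - \<Gamma> i ** B + B ** \<Gamma> i" by (simp add: C_eq)
  then have "trace (L ** dB i) = t i - trace (L ** \<Gamma> i ** B) + trace (L ** B ** \<Gamma> i)"
    by (simp add: t_def mm_simps trace_add trace_sub matrix_mul_assoc)
  also have "trace (L ** \<Gamma> i ** B) = trace (B ** L ** \<Gamma> i)"
    using trace_mul_sym[of "L ** \<Gamma> i" B] by (simp add: matrix_mul_assoc)
  also have "B ** L = L ** B" by (rule BL)
  finally show ?thesis by simp
qed

lemma CS_eq: "CS i = v *\<^sub>R (transpose (X i) ** g0)"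
proof -
  have "CS i = (v / 2 * t i) *\<^sub>R (transpose K ** g0) + v *\<^sub>R (transpose (dK i + \<Gamma> i ** K - K ** \<Gamma> i) ** g0)"
    by (simp add: CS_def DS_def Sx_def trace_dB dgG mm_simps matrix_mul_assoc algebra_simps)
  also have "\<dots> = (v / 2 * t i) *\<^sub>R (transpose K ** g0) + v *\<^sub>R (transpose (K ** (C i ** B + B ** C i) ** K) ** g0)"
    by (simp only: dK_cov)
  also have "\<dots> = v *\<^sub>R (transpose (X i) ** g0)"
    by (simp only: X_def tr_add tr_scale mm_add_r mm_scale_l scaleR_add_right scaleR_scaleR) (simp add: algebra_simps)
  finally show ?thesis .
qed

end


lemma mv_axis: "((M::real^'n^'m) *v axis l 1) $ j = M $ j $ l"
  by (simp add: matrix_vector_mult_def axis_def if_distrib cong: if_cong)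

lemma sumR_comp: "(\<Sum>i\<in>S. (c i) *\<^sub>R (Y i :: real^'n^'m)) $ j $ l = (\<Sum>i\<in>S. c i * Y i $ j $ l)"
  by (simp add: sum_component)

lemma frame_contract:
  fixes E :: "'n::finite \<Rightarrow> real^'n" and Y :: "'n \<Rightarrow> real^'n^'n"
  shows "(\<Sum>k\<in>UNIV. ten2 (\<Sum>i\<in>UNIV. E k $ i *\<^sub>R Y i) (E k) (axis l 1))
       = (\<Sum>i\<in>UNIV. \<Sum>j\<in>UNIV. (\<Sum>k\<in>UNIV. E k $ i * E k $ j) * Y i $ j $ l)"
proof -
  have "(\<Sum>k\<in>UNIV. ten2 (\<Sum>i\<in>UNIV. E k $ i *\<^sub>R Y i) (E k) (axis l 1))
     = (\<Sum>k\<in>UNIV. \<Sum>j\<in>UNIV. E k $ j * (\<Sum>i\<in>UNIV. E k $ i * Y i $ j $ l))"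
    by (simp add: ten2_def inner_vec_def mv_axis sumR_comp)
  also have "\<dots> = (\<Sum>k\<in>UNIV. \<Sum>j\<in>UNIV. \<Sum>i\<in>UNIV. E k $ i * E k $ j * Y i $ j $ l)"
    by (simp add: sum_distrib_left mult_ac)
  also have "\<dots> = (\<Sum>j\<in>UNIV. \<Sum>k\<in>UNIV. \<Sum>i\<in>UNIV. E k $ i * E k $ j * Y i $ j $ l)"
    by (rule sum.swap)
  also have "\<dots> = (\<Sum>j\<in>UNIV. \<Sum>i\<in>UNIV. \<Sum>k\<in>UNIV. E k $ i * E k $ j * Y i $ j $ l)"
    by (intro sum.cong refl sum.swap)
  also have "\<dots> = (\<Sum>i\<in>UNIV. \<Sum>j\<in>UNIV. \<Sum>k\<in>UNIV. E k $ i * E k $ j * Y i $ j $ l)"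
    by (rule sum.swap)
  also have "\<dots> = (\<Sum>i\<in>UNIV. \<Sum>j\<in>UNIV. (\<Sum>k\<in>UNIV. E k $ i * E k $ j) * Y i $ j $ l)"
    by (simp add: sum_distrib_right)
  finally show ?thesis .
qed


definition frob :: "real^'n::finite^'n \<Rightarrow> real^'n^'n \<Rightarrow> real" where
  "frob A A' = (\<Sum>p\<in>UNIV. \<Sum>q\<in>UNIV. A $ p $ q * A' $ p $ q)"

lemma frob_trace: "frob A A' = trace (transpose A ** A')"
  by (simp add: frob_def trace_def matrix_matrix_mult_def transpose_def) (rule sum.swap)

context alg
begin

definition "P = (\<chi> a p. E p $ a)"

lemma PP: "P ** transpose P = h"
  using frame by (simp add: P_def matrix_matrix_mult_def transpose_def vec_eq_iff)

lemma PP_l: "Y ** P ** transpose P = Y ** h"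
  by (simp add: matrix_mul_assoc[symmetric] PP)

lemma ten2_P: "ten2 A (E p) (E q) = (transpose P ** A ** P) $ p $ q"
  by (simp add: ten2_def P_def inner_vec_def matrix_vector_mult_def matrix_matrix_mult_def
      transpose_def sum_distrib_left sum_distrib_right mult_ac) (rule sum.swap)

definition "ip2' A A' = (1/2) * (\<Sum>p\<in>UNIV. \<Sum>q\<in>UNIV. ten2 A (E p) (E q) * ten2 A' (E p) (E q))"

lemma ip2'_eq: "ip2' A A' = (1/2) * frob A (h ** A' ** h)"
proof -
  have "(\<Sum>p\<in>UNIV. \<Sum>q\<in>UNIV. ten2 A (E p) (E q) * ten2 A' (E p) (E q))
      = frob (transpose P ** A ** P) (transpose P ** A' ** P)"
    by (simp add: frob_def ten2_P)
  also have "\<dots> = trace (transpose P ** transpose A ** P ** (transpose P ** A' ** P))"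
    by (simp add: frob_trace tr_mult matrix_mul_assoc)
  also have "\<dots> = trace ((transpose A ** P ** (transpose P ** A' ** P)) ** transpose P)"
    using trace_mul_sym[of "transpose P" "transpose A ** P ** (transpose P ** A' ** P)"]
    by (simp add: matrix_mul_assoc)
  also have "\<dots> = trace (transpose A ** (h ** A' ** h))"
    by (simp add: matrix_mul_assoc PP_l)
  finally show ?thesis by (simp add: ip2'_def frob_trace)
qed

definition "Wt = (\<chi> a c e. F a $ c $ e + F c $ e $ a + F e $ a $ c)"
definition "\<Phi> = transpose (K ** B) ** g0"
definition "\<Psi> = transpose (B ** K ** h)"
definition "cvec = (\<chi> a. (1/2) * frob (Wt $ a) \<Psi>)"

lemma F_skew: "transpose (F i) = - F i"
  by (simp add: F_def mm_simps d\<beta>s \<beta>s algebra_simps)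

lemma hPhih: "h ** \<Phi> ** h = \<Psi>"
proof -
  have "h ** \<Phi> ** h = h ** transpose (K ** B)" by (simp add: \<Phi>_def matrix_mul_assoc[symmetric] gh)
  also have "\<dots> = \<Psi>" by (simp add: \<Psi>_def BK tr_mult hs)
  finally show ?thesis .
qed

lemma Psi_skew: "transpose \<Psi> = - \<Psi>"
proof -
  have "transpose \<Psi> = K ** B ** h" by (simp add: \<Psi>_def BK)
  also have "\<dots> = K ** h ** Sm ** h" by (simp add: B_hS matrix_mul_assoc)
  also have "K ** h = h ** transpose K" using Kh_sym by (simp add: tr_mult hs)
  finally have 1: "transpose \<Psi> = h ** transpose K ** Sm ** h" .
  have "\<Psi> = h ** transpose K ** transpose B" by (simp add: \<Psi>_def tr_mult hs matrix_mul_assoc)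
  also have "\<dots> = - (h ** transpose K ** Sm ** h)" by (simp add: BT mm_simps matrix_mul_assoc)
  finally show ?thesis using 1 by simp
qed

lemma Psi_comp: "\<Psi> $ i $ c = (B ** K ** h) $ c $ i"
  by (simp add: \<Psi>_def transpose_def)

lemma skew_comp: "transpose (A::real^'n^'n) = - A \<Longrightarrow> A $ i $ j = - A $ j $ i"
proof -
  assume a: "transpose A = - A"
  have "transpose A $ j $ i = (- A) $ j $ i" using a by simp
  then show ?thesis by (simp add: transpose_def)
qed

lemma T1: "frob (F a) \<Psi> = t a"
proof -
  have "frob (F a) \<Psi> = trace (B ** K ** h ** F a)"
    by (simp add: frob_trace \<Psi>_def tr_mult[symmetric] trace_transpose)
  moreover have "t a = - trace (L ** h ** F a)"
    by (simp add: t_def C_def F_skew mm_neg_r trace_neg matrix_mul_assoc)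
  moreover have "trace (B ** K ** h ** F a) + trace (L ** h ** F a) = trace (K ** h ** F a)"
    by (simp add: L_eq mm_simps trace_add[symmetric] trace_sub matrix_mul_assoc)
  moreover have "trace (K ** h ** F a) = 0"
    by (rule trace_sym_skew[OF Kh_sym F_skew])
  ultimately show ?thesis by simp
qed

lemma cvec_comp: "cvec $ a = t a / 2 + (\<Sum>i\<in>UNIV. \<Sum>c\<in>UNIV. F i $ c $ a * \<Psi> $ i $ c)"
proof -
  let ?T1 = "\<Sum>p\<in>UNIV. \<Sum>q\<in>UNIV. F a $ p $ q * \<Psi> $ p $ q"
  let ?T2 = "\<Sum>p\<in>UNIV. \<Sum>q\<in>UNIV. F p $ q $ a * \<Psi> $ p $ q"
  let ?T3 = "\<Sum>p\<in>UNIV. \<Sum>q\<in>UNIV. F q $ a $ p * \<Psi> $ p $ q"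
  have "cvec $ a = 1/2 * (?T1 + ?T2 + ?T3)"
    by (simp add: cvec_def Wt_def frob_def distrib_right sum.distrib)
  moreover have "?T1 = t a" using T1 by (simp add: frob_def)
  moreover have "?T3 = ?T2"
  proof -
    have "?T3 = (\<Sum>q\<in>UNIV. \<Sum>p\<in>UNIV. F q $ a $ p * \<Psi> $ p $ q)" by (rule sum.swap)
    also have "\<dots> = (\<Sum>q\<in>UNIV. \<Sum>p\<in>UNIV. F q $ p $ a * \<Psi> $ q $ p)"
    proof (intro sum.cong refl)
      fix q p
      have f: "F q $ a $ p = - F q $ p $ a" by (rule skew_comp[OF F_skew])
      have ps: "\<Psi> $ p $ q = - \<Psi> $ q $ p" by (rule skew_comp[OF Psi_skew])
      show "F q $ a $ p * \<Psi> $ p $ q = F q $ p $ a * \<Psi> $ q $ p" by (simp only: f ps minus_mult_minus)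
    qed
    finally show ?thesis .
  qed
  ultimately show ?thesis by simp
qed

lemma mv_sum: "(A::real^'n^'m) *v (\<Sum>i\<in>S. f i) = (\<Sum>i\<in>S. A *v f i)"
  by (induct S rule: infinite_finite_induct) (simp_all add: matrix_vector_right_distrib)

lemma cvec_vec: "cvec = (\<Sum>i\<in>UNIV. (t i / 2) *\<^sub>R axis i 1)
    + (\<Sum>i\<in>UNIV. transpose (F i) *v ((B ** K ** h) *v axis i 1))"
proof -
  have "cvec $ a = ((\<Sum>i\<in>UNIV. (t i / 2) *\<^sub>R axis i 1)
    + (\<Sum>i\<in>UNIV. transpose (F i) *v ((B ** K ** h) *v axis i 1))) $ a" for a
  proof -
    have "(\<Sum>i\<in>UNIV. (t i / 2) *\<^sub>R (axis i 1 :: real^'n)) $ a = t a / 2"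
      by (simp add: sum_component axis_def if_distrib cong: if_cong)
    moreover have "(\<Sum>i\<in>UNIV. transpose (F i) *v ((B ** K ** h) *v axis i 1)) $ a
       = (\<Sum>i\<in>UNIV. \<Sum>c\<in>UNIV. F i $ c $ a * \<Psi> $ i $ c)"
      by (simp add: sum_component matrix_vector_mult_def transpose_def axis_def if_distrib Psi_comp cong: if_cong)
    ultimately show ?thesis by (simp add: cvec_comp)
  qed
  then show ?thesis by (simp add: vec_eq_iff)
qed

lemma mm_sum: "(A::real^'n^'m) ** (\<Sum>i\<in>S. f i) = (\<Sum>i\<in>S. A ** f i)"
  by (induct S rule: infinite_finite_induct) (simp_all add: matrix_add_ldistrib mm_zero_r)

lemma ten2_mv: "ten2 M (A *v u) w = ten2 (transpose A ** M) u w"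
proof -
  have e: "A *v u = u v* transpose A" by simp
  show ?thesis unfolding ten2_def by (simp only: e dot_lmul_matrix matrix_vector_mul_assoc)
qed

lemma hs_comp: "h $ i $ j = h $ j $ i"
  using hs by (metis transpose_def vec_lambda_beta)

lemma mvmv_axis: "((M::real^'n^'n) *v (N *v axis j 1)) $ l = (M ** N) $ l $ j"
  by (simp add: matrix_vector_mul_assoc mv_axis)

definition "\<delta>v = (\<chi> l. - (\<Sum>i\<in>UNIV. ten2 (\<Sum>j\<in>UNIV. E i $ j *\<^sub>R F j) (K *v E i) (axis l 1)))"

lemma delta_vec: "\<delta>v = - (\<Sum>j\<in>UNIV. transpose (F j) *v (K *v (h *v axis j 1)))"
proof -
  have "\<delta>v $ l = (- (\<Sum>j\<in>UNIV. transpose (F j) *v (K *v (h *v axis j 1)))) $ l" for l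
  proof -
    have "(\<Sum>i\<in>UNIV. ten2 (\<Sum>j\<in>UNIV. E i $ j *\<^sub>R F j) (K *v E i) (axis l 1))
        = (\<Sum>i\<in>UNIV. ten2 (\<Sum>j\<in>UNIV. E i $ j *\<^sub>R (transpose K ** F j)) (E i) (axis l 1))"
      by (simp add: ten2_mv mm_sum mm_scale_r)
    also have "\<dots> = (\<Sum>j\<in>UNIV. \<Sum>m\<in>UNIV. h $ j $ m * (transpose K ** F j) $ m $ l)"
      by (simp add: frame_contract frame)
    also have "\<dots> = (\<Sum>j\<in>UNIV. (h ** (transpose K ** F j)) $ j $ l)"
      by (simp add: matrix_matrix_mult_def)
    also have "\<dots> = (\<Sum>j\<in>UNIV. (transpose (F j) *v (K *v (h *v axis j 1))) $ l)"
    proof (intro sum.cong refl)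
      fix j
      have "(transpose (F j) *v (K *v (h *v axis j 1))) $ l = (transpose (F j) ** K ** h) $ l $ j"
        by (simp only: matrix_vector_mul_assoc mv_axis matrix_mul_assoc)
      also have "\<dots> = transpose (transpose (F j) ** K ** h) $ j $ l" by (simp add: transpose_def)
      also have "transpose (transpose (F j) ** K ** h) = h ** (transpose K ** F j)"
        by (simp add: tr_mult hs matrix_mul_assoc)
      finally show "(h ** (transpose K ** F j)) $ j $ l = (transpose (F j) *v (K *v (h *v axis j 1))) $ l" by simp
    qed
    finally show ?thesis by (simp add: \<delta>v_def sum_component)
  qed
  then show ?thesis by (simp add: vec_eq_iff)
qed

lemma cterm: "(\<Sum>k\<in>UNIV. (\<Sum>a\<in>UNIV. E k $ a * c $ a) *\<^sub>R (K *v E k)) = K *v (h *v c)"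
proof -
  have "(\<Sum>k\<in>UNIV. (\<Sum>a\<in>UNIV. E k $ a * c $ a) *\<^sub>R (K *v E k))
      = K *v (\<Sum>k\<in>UNIV. (\<Sum>a\<in>UNIV. E k $ a * c $ a) *\<^sub>R E k)"
    by (simp add: mv_sum matrix_vector_mult_scaleR)
  also have "(\<Sum>k\<in>UNIV. (\<Sum>a\<in>UNIV. E k $ a * c $ a) *\<^sub>R E k) = h *v c"
  proof -
    have "(\<Sum>k\<in>UNIV. (\<Sum>a\<in>UNIV. E k $ a * c $ a) *\<^sub>R E k) $ m = (h *v c) $ m" for m
    proof -
      have "(\<Sum>k\<in>UNIV. (\<Sum>a\<in>UNIV. E k $ a * c $ a) *\<^sub>R E k) $ m
          = (\<Sum>k\<in>UNIV. \<Sum>a\<in>UNIV. E k $ a * E k $ m * c $ a)"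
        by (simp add: sum_component sum_distrib_right sum_distrib_left mult_ac)
      also have "\<dots> = (\<Sum>a\<in>UNIV. \<Sum>k\<in>UNIV. E k $ a * E k $ m * c $ a)" by (rule sum.swap)
      also have "\<dots> = (\<Sum>a\<in>UNIV. h $ a $ m * c $ a)"
        by (simp add: sum_distrib_right[symmetric] frame)
      also have "\<dots> = (h *v c) $ m" by (simp add: matrix_vector_mult_def hs_comp[of m])
      finally show ?thesis .
    qed
    then show ?thesis by (simp add: vec_eq_iff)
  qed
  finally show ?thesis .
qed

lemma mv_neg: "(A::real^'n^'m) *v (- x) = - (A *v x)"
  by (simp add: matrix_vector_mult_def vec_eq_iff sum_negf)

lemma smv: "(c *\<^sub>R (A::real^'n^'m)) *v x = c *\<^sub>R (A *v x)"
  by (simp add: matrix_vector_mult_def vec_eq_iff sum_distrib_left mult.assoc)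

lemma Xv: "X i *v w = (t i / 2) *\<^sub>R (K *v w) + K *v (C i *v (B *v (K *v w))) + K *v (B *v (C i *v (K *v w)))"
  by (simp add: X_def matrix_vector_mult_add_rdistrib smv matrix_vector_mul_assoc[symmetric]
      matrix_vector_right_distrib)

lemma Cv: "C i *v w = h *v (transpose (F i) *v w)"
  by (simp only: C_def matrix_vector_mul_assoc)

lemma hc: "h *v cvec = (\<Sum>i\<in>UNIV. (t i / 2) *\<^sub>R (h *v axis i 1)) + (\<Sum>i\<in>UNIV. C i *v (B *v (K *v (h *v axis i 1))))"
proof -
  have "h *v cvec = (\<Sum>i\<in>UNIV. (t i / 2) *\<^sub>R (h *v axis i 1))
      + (\<Sum>i\<in>UNIV. h *v (transpose (F i) *v ((B ** K ** h) *v axis i 1)))"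
    by (simp only: cvec_vec matrix_vector_right_distrib mv_sum matrix_vector_mult_scaleR)
  also have "(\<Sum>i\<in>UNIV. h *v (transpose (F i) *v ((B ** K ** h) *v axis i 1)))
     = (\<Sum>i\<in>UNIV. C i *v (B *v (K *v (h *v axis i 1))))"
    by (simp only: Cv matrix_vector_mul_assoc[symmetric])
  finally show ?thesis .
qed

lemma hdelta: "h *v \<delta>v = - (\<Sum>j\<in>UNIV. C j *v (K *v (h *v axis j 1)))"
  by (simp add: delta_vec mv_sum Cv matrix_vector_mult_diff_distrib[of h 0, simplified])

lemma frob_int: "frob (interior3 u W) A = (\<Sum>a\<in>UNIV. u $ a * frob (W $ a) A)"
proof -
  have "frob (interior3 u W) A = (\<Sum>p\<in>UNIV. \<Sum>q\<in>UNIV. \<Sum>a\<in>UNIV. u $ a * W $ a $ p $ q * A $ p $ q)"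
    by (simp add: frob_def interior3_def sum_distrib_right)
  also have "\<dots> = (\<Sum>p\<in>UNIV. \<Sum>a\<in>UNIV. \<Sum>q\<in>UNIV. u $ a * W $ a $ p $ q * A $ p $ q)"
    by (intro sum.cong refl sum.swap)
  also have "\<dots> = (\<Sum>a\<in>UNIV. \<Sum>p\<in>UNIV. \<Sum>q\<in>UNIV. u $ a * W $ a $ p $ q * A $ p $ q)"
    by (rule sum.swap)
  also have "\<dots> = (\<Sum>a\<in>UNIV. u $ a * frob (W $ a) A)"
    by (simp add: frob_def sum_distrib_left mult.assoc)
  finally show ?thesis .
qed

lemma ip2_c: "ip2' (interior3 (E k) Wt) \<Phi> = (\<Sum>a\<in>UNIV. E k $ a * cvec $ a)"
  by (simp add: ip2'_eq hPhih frob_int cvec_def sum_distrib_left mult_ac)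

lemma main_vec: "(\<Sum>i\<in>UNIV. X i *v (h *v axis i 1)) =
   (\<Sum>k\<in>UNIV. ip2' (interior3 (E k) Wt) \<Phi> *\<^sub>R (K *v E k)) - (K ** B) *v (h *v \<delta>v)"
proof -
  have "(\<Sum>k\<in>UNIV. ip2' (interior3 (E k) Wt) \<Phi> *\<^sub>R (K *v E k)) = K *v (h *v cvec)"
    by (simp only: ip2_c cterm)
  then show ?thesis
    by (simp add: Xv hc hdelta sum.distrib mv_sum matrix_vector_right_distrib matrix_vector_mult_scaleR
        matrix_vector_mul_assoc[symmetric] mv_neg algebra_simps)
qed

lemma Wt_eq: "Wt = (\<chi> a c e. d\<beta> a $ c $ e + d\<beta> c $ e $ a + d\<beta> e $ a $ c)"
proof -
  have bs: "\<And>i j. \<beta> $ i $ j = - \<beta> $ j $ i" by (rule skew_comp[OF \<beta>s])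
  have Fc: "F a $ c $ e = d\<beta> a $ c $ e - (\<Sum>m\<in>UNIV. \<Gamma> a $ m $ c * \<beta> $ m $ e)
      - (\<Sum>m\<in>UNIV. \<beta> $ c $ m * \<Gamma> a $ m $ e)" for a c e
    by (simp add: F_def matrix_matrix_mult_def transpose_def)
  have z: "(\<Sum>m\<in>UNIV. \<Gamma> a $ m $ c * \<beta> $ m $ e) + (\<Sum>m\<in>UNIV. \<beta> $ e $ m * \<Gamma> c $ m $ a) = 0"
    for a c e
  proof -
    have "(\<Sum>m\<in>UNIV. \<Gamma> a $ m $ c * \<beta> $ m $ e) + (\<Sum>m\<in>UNIV. \<beta> $ e $ m * \<Gamma> c $ m $ a)
       = (\<Sum>m\<in>UNIV. \<Gamma> a $ m $ c * \<beta> $ m $ e + \<beta> $ e $ m * \<Gamma> c $ m $ a)"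
      by (simp add: sum.distrib)
    also have "\<dots> = 0"
    proof (rule sum.neutral, rule ballI)
      fix m
      have "\<beta> $ e $ m = - \<beta> $ m $ e" by (rule bs)
      moreover have "\<Gamma> c $ m $ a = \<Gamma> a $ m $ c" by (rule \<Gamma>s)
      ultimately show "\<Gamma> a $ m $ c * \<beta> $ m $ e + \<beta> $ e $ m * \<Gamma> c $ m $ a = 0" by simp
    qed
    finally show ?thesis .
  qed
  have "Wt $ a $ c $ e = d\<beta> a $ c $ e + d\<beta> c $ e $ a + d\<beta> e $ a $ c" for a c e
  proof -
    have "Wt $ a $ c $ e = F a $ c $ e + F c $ e $ a + F e $ a $ c" by (simp add: Wt_def)
    also have "\<dots> = d\<beta> a $ c $ e + d\<beta> c $ e $ a + d\<beta> e $ a $ c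
       - ((\<Sum>m\<in>UNIV. \<Gamma> a $ m $ c * \<beta> $ m $ e) + (\<Sum>m\<in>UNIV. \<beta> $ e $ m * \<Gamma> c $ m $ a))
       - ((\<Sum>m\<in>UNIV. \<Gamma> e $ m $ a * \<beta> $ m $ c) + (\<Sum>m\<in>UNIV. \<beta> $ c $ m * \<Gamma> a $ m $ e))
       - ((\<Sum>m\<in>UNIV. \<Gamma> c $ m $ e * \<beta> $ m $ a) + (\<Sum>m\<in>UNIV. \<beta> $ a $ m * \<Gamma> e $ m $ c))"
      unfolding Fc by (simp add: algebra_simps)
    also have "\<dots> = d\<beta> a $ c $ e + d\<beta> c $ e $ a + d\<beta> e $ a $ c" by (simp add: z)
    finally show ?thesis .
  qed
  then show ?thesis by (simp add: vec_eq_iff)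
qed

lemma core:
  "(\<chi> l. \<Sum>k\<in>UNIV. ten2 (\<Sum>i\<in>UNIV. E k $ i *\<^sub>R CS i) (E k) (axis l 1)) =
   v *\<^sub>R (g0 *v ((\<Sum>k\<in>UNIV. ip2' (interior3 (E k) Wt) \<Phi> *\<^sub>R (K *v E k)) - (K ** B) *v (h *v \<delta>v)))"
proof -
  have "(\<Sum>k\<in>UNIV. ten2 (\<Sum>i\<in>UNIV. E k $ i *\<^sub>R CS i) (E k) (axis l 1))
      = (v *\<^sub>R (g0 *v (\<Sum>i\<in>UNIV. X i *v (h *v axis i 1)))) $ l" for l
  proof -
    have "(\<Sum>k\<in>UNIV. ten2 (\<Sum>i\<in>UNIV. E k $ i *\<^sub>R CS i) (E k) (axis l 1))
        = (\<Sum>i\<in>UNIV. \<Sum>j\<in>UNIV. h $ i $ j * CS i $ j $ l)"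
      by (simp add: frame_contract frame)
    also have "\<dots> = (\<Sum>i\<in>UNIV. (h ** CS i) $ i $ l)"
      by (simp add: matrix_matrix_mult_def)
    also have "\<dots> = (\<Sum>i\<in>UNIV. v * (h ** transpose (X i) ** g0) $ i $ l)"
      by (simp add: CS_eq mm_scale_r matrix_mul_assoc)
    also have "\<dots> = (\<Sum>i\<in>UNIV. v * (g0 *v (X i *v (h *v axis i 1))) $ l)"
    proof (intro sum.cong refl)
      fix i
      have "(g0 *v (X i *v (h *v axis i 1))) $ l = (g0 ** X i ** h) $ l $ i"
        by (simp only: matrix_vector_mul_assoc mv_axis matrix_mul_assoc)
      also have "\<dots> = transpose (g0 ** X i ** h) $ i $ l" by (simp add: transpose_def)
      also have "transpose (g0 ** X i ** h) = h ** transpose (X i) ** g0"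
        by (simp add: tr_mult gs hs matrix_mul_assoc)
      finally show "v * (h ** transpose (X i) ** g0) $ i $ l = v * (g0 *v (X i *v (h *v axis i 1))) $ l"
        by simp
    qed
    also have "\<dots> = (v *\<^sub>R (g0 *v (\<Sum>i\<in>UNIV. X i *v (h *v axis i 1)))) $ l"
      by (simp add: mv_sum sum_component sum_distrib_left)
    finally show ?thesis .
  qed
  then show ?thesis by (simp add: vec_eq_iff main_vec)
qed

end


context setting
begin

lemma g_comp_sym: "y \<in> U \<Longrightarrow> g y $ i $ j = g y $ j $ i"
  using g_sym[of y] by (metis transpose_def vec_lambda_beta)

lemma dg_sym: "x \<in> U \<Longrightarrow> pd p (\<lambda>y. g y $ i $ j) x = pd p (\<lambda>y. g y $ j $ i) x"
  by (rule pd_cong[OF U]) (auto simp: g_comp_sym)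

lemma chr_sym: assumes x: "x \<in> U" shows "chr g x m i j = chr g x m j i"
  unfolding chr_def by (simp add: dg_sym[OF x, of _ i j] algebra_simps)

definition "Gam x i = (\<chi> m j. chr g x m i j)"

lemma metric_compat:
  assumes x: "x \<in> U"
  shows "md i g x = transpose (Gam x i) ** g x + g x ** Gam x i"
proof -
  let ?h = "matrix_inv (g x)"
  define Pm where "Pm = (\<chi> p j. pd i (\<lambda>y. g y $ p $ j) x + pd j (\<lambda>y. g y $ p $ i) x - pd p (\<lambda>y. g y $ i $ j) x)"
  have G: "Gam x i = (1/2) *\<^sub>R (?h ** Pm)"
    by (simp add: Gam_def chr_def Pm_def vec_eq_iff matrix_matrix_mult_def)
  have gG: "g x ** Gam x i = (1/2) *\<^sub>R Pm"
    by (simp add: G mm_scale_r matrix_mul_assoc minv_works[OF g_inv[OF x]])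
  have Gg: "transpose (Gam x i) ** g x = (1/2) *\<^sub>R transpose Pm"
  proof -
    have "transpose (Gam x i) ** g x = transpose (g x ** Gam x i)" by (simp add: tr_mult g_sym[OF x])
    then show ?thesis by (simp add: gG tr_scale)
  qed
  have "md i g x $ a $ l = ((1/2) *\<^sub>R transpose Pm + (1/2) *\<^sub>R Pm) $ a $ l" for a l
    by (simp add: md_def Pm_def transpose_def dg_sym[OF x, of _ a l] dg_sym[OF x, of _ i a]
        dg_sym[OF x, of _ l i] algebra_simps)
  then show ?thesis by (simp add: Gg gG vec_eq_iff)
qed

lemma covD2_eq: "covD2 g T x u = (\<Sum>i\<in>UNIV. u $ i *\<^sub>R (md i T x - transpose (Gam x i) ** T x - T x ** Gam x i))"
  by (simp add: covD2_def vec_eq_iff sum_component md_def matrix_matrix_mult_def transpose_def Gam_def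
      algebra_simps sum_subtractf mult.commute)

lemma db_skew: assumes x: "x \<in> U" shows "transpose (md i b x) = - md i b x"
proof -
  have "transpose (md i b x) = md i (\<lambda>y. transpose (b y)) x" by (simp add: md_transpose)
  also have "\<dots> = md i (\<lambda>y. - b y) x" by (rule md_cong[OF U x]) (simp add: b_skew)
  also have "\<dots> = - md i b x" by (rule md_uminus[OF mdf_b[OF x]])
  finally show ?thesis .
qed

lemma frame_h:
  assumes x: "x \<in> U" and E: "orthonormal_frame_on U g E"
  shows "(\<Sum>k\<in>UNIV. E k x $ i * E k x $ j) = matrix_inv (g x) $ i $ j"
proof -
  define P where "P = (\<chi> a k. E k x $ a)"
  have "(transpose P ** g x ** P) $ k $ l = (if k = l then 1 else 0)" for k l
  proof -
    have "(transpose P ** g x ** P) $ k $ l = gip g x (E k x) (E l x)"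
      by (simp add: P_def gip_def ten2_def matrix_matrix_mult_def transpose_def inner_vec_def
          matrix_vector_mult_def sum_distrib_left sum_distrib_right mult_ac) (rule sum.swap)
    then show ?thesis using E x by (simp add: orthonormal_frame_on_def)
  qed
  then have "(transpose P ** g x) ** P = mat 1" by (simp add: vec_eq_iff mat_def)
  then have "P ** (transpose P ** g x) = mat 1" using matrix_left_right_inverse by blast
  then have "(P ** transpose P) ** g x = mat 1" by (simp add: matrix_mul_assoc)
  then have "matrix_inv (g x) = P ** transpose P" using minv_unique by blast
  then show ?thesis by (simp add: P_def matrix_matrix_mult_def transpose_def)
qed

end


context setting
begin

lemma main_at:
  assumes x: "x \<in> U" and E: "orthonormal_frame_on U g E"
  shows "divT g E (stress g b) x =
            vg g b x *\<^sub>R vflat g x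
              ((\<Sum>k\<in>UNIV. ip2 E x (interior3 (E k x) (dform2 b x))
                               (end_flat g x (matrix_inv (Gb g b x) ** bsharp g b x))
                          *\<^sub>R (matrix_inv (Gb g b x) *v E k x))
               - (matrix_inv (Gb g b x) ** bsharp g b x) *v fsharp g x (delta_b g E b b x))"
proof -
  interpret A: alg "g x" "matrix_inv (g x)" "b x" "Gam x" "\<lambda>i. md i g x" "\<lambda>i. md i b x" "vg g b x" "\<lambda>k. E k x"
  proof
    show "matrix_inv (g x) ** g x = mat 1" by (rule minv_works(2)[OF g_inv[OF x]])
    show "g x ** matrix_inv (g x) = mat 1" by (rule minv_works(1)[OF g_inv[OF x]])
    show "transpose (g x) = g x" by (rule g_sym[OF x])
    show "transpose (matrix_inv (g x)) = matrix_inv (g x)" by (rule h_sym[OF x])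
    show "transpose (b x) = - b x" by (rule b_skew[OF x])
    show "\<And>i. transpose (md i b x) = - md i b x" by (rule db_skew[OF x])
    show "\<And>i. md i g x = transpose (Gam x i) ** g x + g x ** Gam x i" by (rule metric_compat[OF x])
    show "\<And>i j m. Gam x i $ m $ j = Gam x j $ m $ i" by (simp add: Gam_def chr_sym[OF x])
    show "matrix_inv (mat 1 - matrix_inv (g x) ** transpose (b x) ** (matrix_inv (g x) ** transpose (b x))) **
        (mat 1 - matrix_inv (g x) ** transpose (b x) ** (matrix_inv (g x) ** transpose (b x))) = mat 1"
      using minv_works(2)[OF G_inv[OF x]] by (simp add: Gb_def bsharp_def)
    show "matrix_inv (mat 1 + matrix_inv (g x) ** transpose (b x)) ** (mat 1 + matrix_inv (g x) ** transpose (b x)) = mat 1"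
      using minv_works(2)[OF IB_inv[OF x]] by (simp add: bsharp_def)
    show "\<And>i j. (\<Sum>k\<in>UNIV. E k x $ i * E k x $ j) = matrix_inv (g x) $ i $ j"
      by (rule frame_h[OF x E])
  qed
  have B: "bsharp g b x = A.B" by (simp add: bsharp_def A.B_def)
  have K: "matrix_inv (Gb g b x) = A.K" by (simp add: Gb_def A.K_def A.G_def B)
  have L: "matrix_inv (mat 1 + bsharp g b x) = A.L" by (simp add: A.L_def B)
  have dB: "md i (bsharp g b) x = A.dB i" for i by (simp add: md_B[OF x] md_h[OF x] A.dB_def)
  have dG: "md i (Gb g b) x = A.dG i" for i by (simp add: md_G[OF x] dB B A.dG_def)
  have dK: "md i (\<lambda>y. matrix_inv (Gb g b y)) x = A.dK i" for i by (simp add: md_K[OF x] dG K A.dK_def)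
  have dS: "md i (stress g b) x = A.DS i" for i by (simp add: md_S[OF x] pd_vg[OF x] dK K L dB A.DS_def)
  have Sx: "stress g b x = A.Sx" by (simp add: stress_def end_flat_def K A.Sx_def)
  have cov: "covD2 g (stress g b) x u = (\<Sum>i\<in>UNIV. u $ i *\<^sub>R A.CS i)" for u
    by (simp add: covD2_eq dS Sx A.CS_def)
  have covb: "covD2 g b x u = (\<Sum>i\<in>UNIV. u $ i *\<^sub>R A.F i)" for u
    by (simp add: covD2_eq A.F_def)
  have lhs: "divT g E (stress g b) x = (\<chi> l. \<Sum>k\<in>UNIV. ten2 (\<Sum>i\<in>UNIV. E k x $ i *\<^sub>R A.CS i) (E k x) (axis l 1))"
    by (simp add: divT_def cov)
  have ip: "ip2 E x = A.ip2'" by (simp add: ip2_def A.ip2'_def fun_eq_iff)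
  have dform: "dform2 b x = A.Wt" unfolding A.Wt_eq by (simp add: dform2_def md_def)
  have Phi: "end_flat g x (A.K ** A.B) = A.\<Phi>" by (simp add: end_flat_def A.\<Phi>_def)
  have delta: "delta_b g E b b x = A.\<delta>v" by (simp add: delta_b_def covb K A.\<delta>v_def)
  show ?thesis unfolding lhs A.core
    by (simp add: vflat_def fsharp_def ip dform Phi delta K B)
qed

end

theorem proposition3p6:
  fixes U :: "(real^'n) set"
    and g b :: "real^'n \<Rightarrow> real^'n^'n"
    and E :: "'n \<Rightarrow> real^'n \<Rightarrow> real^'n"
  assumes "open U"
    and "riem_metric_on U g"
    and "two_form_on U b"
    and "orthonormal_frame_on U g E"
  shows "(\<forall>x\<in>U. divT g E (stress g b) x =
            vg g b x *\<^sub>R vflat g x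
              ((\<Sum>k\<in>UNIV. ip2 E x (interior3 (E k x) (dform2 b x))
                               (end_flat g x (matrix_inv (Gb g b x) ** bsharp g b x))
                          *\<^sub>R (matrix_inv (Gb g b x) *v E k x))
               - (matrix_inv (Gb g b x) ** bsharp g b x) *v fsharp g x (delta_b g E b b x)))
       \<and> ((\<forall>x\<in>U. dform2 b x = 0 \<and> delta_b g E b b x = 0)
            \<longrightarrow> (\<forall>x\<in>U. divT g E (stress g b) x = 0))"
proof -
  interpret S: setting U g b by unfold_locales (rule assms)+
  have 1: "\<forall>x\<in>U. divT g E (stress g b) x =
            vg g b x *\<^sub>R vflat g x
              ((\<Sum>k\<in>UNIV. ip2 E x (interior3 (E k x) (dform2 b x))
                               (end_flat g x (matrix_inv (Gb g b x) ** bsharp g b x))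
                          *\<^sub>R (matrix_inv (Gb g b x) *v E k x))
               - (matrix_inv (Gb g b x) ** bsharp g b x) *v fsharp g x (delta_b g E b b x))"
    using S.main_at[OF _ assms(4)] by blast
  have int0: "interior3 u (0::real^'n^'n^'n) = 0" for u :: "real^'n"
    by (simp add: interior3_def vec_eq_iff)
  have ip0: "ip2 E x 0 A = 0" for x A by (simp add: ip2_def ten2_def)
  have 2: "(\<forall>x\<in>U. dform2 b x = 0 \<and> delta_b g E b b x = 0) \<longrightarrow> (\<forall>x\<in>U. divT g E (stress g b) x = 0)"
  proof (intro impI ballI)
    fix x assume h0: "\<forall>x\<in>U. dform2 b x = 0 \<and> delta_b g E b b x = 0" and x: "x \<in> U"
    then have "dform2 b x = 0" "delta_b g E b b x = 0" by auto
    then show "divT g E (stress g b) x = 0"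
      using 1 x by (simp add: int0 ip0 fsharp_def vflat_def)
  qed
  show ?thesis using 1 2 by blast
qed


end
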